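(* Let $S=\{x_1,\dots,x_N\}$ satisfy A1, and let $\ell$ be differentiable with $\ell'<0$ everywhere. Let $B$ be a uniformly random subset of $S$ of size $b$. Then for every $w\in\mathbb{R}^d$, $$\|\nabla\mathcal{L}(w)\|^2\le\mathbb{E}_B\|\nabla\mathcal{L}_B(w)\|^2\le\frac{N\sigma_{\max}^2}{\gamma^2b}\|\nabla\mathcal{L}(w)\|^2.$$
   Context: Data $x_i\in\mathbb{R}^d$ (labels absorbed). $\mathcal{L}(w)=\frac1N\sum_i\ell(\langle w,x_i\rangle)$ and $\mathcal{L}_B(w)=\frac1b\sum_{x\in B}\ell(\langle w,x\rangle)$. $\sigma_{\max}$ is the spectral norm of the matrix $(x_1,\dots,x_N)$. A1: there is $w$ with $\langle w,x_i\rangle>0$ for all $i$. Max-margin: $\hat w=\arg\min\{\|w\|^2:\langle w,x_i\rangle\ge1\ \forall i\}$ and $\gamma=1/\|\hat w\|$. *)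

theory Defs
  imports "HOL-Analysis.Analysis" "HOL-Probability.Probability"
begin

definition grad :: "('a::euclidean_space \<Rightarrow> real) \<Rightarrow> 'a \<Rightarrow> 'a" where
  "grad f w = (THE g. (f has_derivative (\<lambda>h. g \<bullet> h)) (at w))"

definition full_loss :: "(real \<Rightarrow> real) \<Rightarrow> (nat \<Rightarrow> 'a::euclidean_space) \<Rightarrow> nat \<Rightarrow> 'a \<Rightarrow> real" where
  "full_loss l x N w = (1 / real N) * (\<Sum>i<N. l (w \<bullet> x i))"

definition batch_loss :: "(real \<Rightarrow> real) \<Rightarrow> (nat \<Rightarrow> 'a::euclidean_space) \<Rightarrow> nat \<Rightarrow> nat set \<Rightarrow> 'a \<Rightarrow> real" where
  "batch_loss l x b B w = (1 / real b) * (\<Sum>i\<in>B. l (w \<bullet> x i))"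

text \<open>Spectral norm of the matrix with columns x 0, ..., x (N-1), i.e. the operator norm
  of c \<mapsto> \<Sum>i<N. c i x i from (R^N, l2) to R^d.\<close>
definition sigma_max :: "(nat \<Rightarrow> 'a::euclidean_space) \<Rightarrow> nat \<Rightarrow> real" where
  "sigma_max x N = Sup {norm (\<Sum>i<N. c i *\<^sub>R x i) | c. (\<Sum>i<N. (c i)\<^sup>2) \<le> 1}"

definition max_margin :: "(nat \<Rightarrow> 'a::euclidean_space) \<Rightarrow> nat \<Rightarrow> 'a" where
  "max_margin x N = (THE w. (\<forall>i<N. w \<bullet> x i \<ge> 1) \<and>
      (\<forall>v. (\<forall>i<N. v \<bullet> x i \<ge> 1) \<longrightarrow> (norm w)\<^sup>2 \<le> (norm v)\<^sup>2))"

definition margin :: "(nat \<Rightarrow> 'a::euclidean_space) \<Rightarrow> nat \<Rightarrow> real" where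
  "margin x N = 1 / norm (max_margin x N)"

definition batches :: "nat \<Rightarrow> nat \<Rightarrow> nat set set" where
  "batches N b = {B. B \<subseteq> {..<N} \<and> card B = b}"

end

theory Submission imports Defs begin

lemma grad_eqI:
  fixes f :: "'a::euclidean_space \<Rightarrow> real"
  assumes "(f has_derivative (\<lambda>h. g \<bullet> h)) (at w)"
  shows "grad f w = g"
  unfolding grad_def
proof (rule the_equality)
  fix g' assume "(f has_derivative (\<lambda>h. g' \<bullet> h)) (at w)"
  then have e: "(\<lambda>h. g \<bullet> h) = (\<lambda>h. g' \<bullet> h)" using has_derivative_unique assms by blast
  have "g \<bullet> (g - g') = g' \<bullet> (g - g')" using fun_cong[OF e] by simp
  then have "(g - g') \<bullet> (g - g') = 0" by (simp add: inner_diff_left)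
  then show "g' = g" by simp
qed (rule assms)

lemma grad_loss:
  fixes x :: "nat \<Rightarrow> 'a::euclidean_space"
  assumes fin: "finite I" and diff: "\<And>t. l differentiable (at t)"
  shows "grad (\<lambda>w. c * (\<Sum>i\<in>I. l (w \<bullet> x i))) w = c *\<^sub>R (\<Sum>i\<in>I. deriv l (w \<bullet> x i) *\<^sub>R x i)"
proof (rule grad_eqI)
  have li: "(l has_derivative (\<lambda>h. deriv l t * h)) (at t)" for t
    using diff[of t] DERIV_deriv_iff_real_differentiable has_field_derivative_imp_has_derivative
    by blast
  have ci: "((\<lambda>w. l (w \<bullet> x i)) has_derivative (\<lambda>h. deriv l (w \<bullet> x i) * (h \<bullet> x i))) (at w)" for i
  proof -
    have "((\<lambda>w. w \<bullet> x i) has_derivative (\<lambda>h. h \<bullet> x i)) (at w)"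
      by (intro derivative_eq_intros) auto
    from diff_chain_at[OF this li[of "w \<bullet> x i"]] show ?thesis by (simp add: o_def)
  qed
  have "((\<lambda>w. c * (\<Sum>i\<in>I. l (w \<bullet> x i))) has_derivative
         (\<lambda>h. c * (\<Sum>i\<in>I. deriv l (w \<bullet> x i) * (h \<bullet> x i)))) (at w)"
    by (intro has_derivative_mult_right has_derivative_sum ci)
  moreover have "(\<lambda>h. c * (\<Sum>i\<in>I. deriv l (w \<bullet> x i) * (h \<bullet> x i)))
     = (\<lambda>h. (c *\<^sub>R (\<Sum>i\<in>I. deriv l (w \<bullet> x i) *\<^sub>R x i)) \<bullet> h)"
    by (auto simp: inner_sum_left inner_sum_right inner_commute mult.commute)
  ultimately show "((\<lambda>w. c * (\<Sum>i\<in>I. l (w \<bullet> x i))) has_derivative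
     (\<lambda>h. (c *\<^sub>R (\<Sum>i\<in>I. deriv l (w \<bullet> x i) *\<^sub>R x i)) \<bullet> h)) (at w)" by simp
qed


lemma batches_fin: "finite (batches N b)"
  by (rule finite_subset[of _ "Pow {..<N}"]) (auto simp: batches_def)

lemma batches_card: "card (batches N b) = N choose b"
  using n_subsets[of "{..<N}" b] by (simp add: batches_def)

lemma batches_ne: "b \<le> N \<Longrightarrow> batches N b \<noteq> {}"
  by (auto simp: batches_def intro!: exI[of _ "{..<b}"])

lemma batch_count:
  assumes "i < N" "1 \<le> b"
  shows "card {B \<in> batches N b. i \<in> B} = (N - 1) choose (b - 1)"
proof -
  let ?A = "{C. C \<subseteq> {..<N} - {i} \<and> card C = b - 1}"
  have eq: "{B \<in> batches N b. i \<in> B} = insert i ` ?A"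
  proof (intro set_eqI iffI)
    fix B assume B: "B \<in> {B \<in> batches N b. i \<in> B}"
    then have fB: "finite B" by (auto simp: batches_def intro: finite_subset)
    have "B = insert i (B - {i})" using B by auto
    moreover have "B - {i} \<in> ?A" using B fB by (auto simp: batches_def)
    ultimately show "B \<in> insert i ` ?A" by blast
  next
    fix B assume "B \<in> insert i ` ?A"
    then obtain C where C: "C \<in> ?A" "B = insert i C" by blast
    have fC: "finite C" using C(1) by (auto intro: finite_subset)
    have "i \<notin> C" using C(1) by auto
    then have "card B = Suc (b - 1)" using C fC by simp
    then have "card B = b" using assms by simp
    then show "B \<in> {B \<in> batches N b. i \<in> B}" using C assms by (auto simp: batches_def)
  qed
  have inj: "inj_on (insert i) ?A"
    by (rule inj_onI) (metis Diff_insert_absorb Diff_iff insert_absorb insertI1 subset_iff mem_Collect_eq)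
  have "card {B \<in> batches N b. i \<in> B} = card ?A" unfolding eq by (rule card_image[OF inj])
  also have "\<dots> = (N - 1) choose (b - 1)" using n_subsets[of "{..<N} - {i}" "b-1"] assms by simp
  finally show ?thesis .
qed

lemma batch_sum:
  fixes f :: "nat \<Rightarrow> real"
  assumes "1 \<le> b"
  shows "(\<Sum>B\<in>batches N b. \<Sum>i\<in>B. f i) = real ((N - 1) choose (b - 1)) * (\<Sum>i<N. f i)"
proof -
  have "(\<Sum>B\<in>batches N b. \<Sum>i\<in>B. f i) = (\<Sum>B\<in>batches N b. \<Sum>i\<in>{i. i \<in> {..<N} \<and> i \<in> B}. f i)"
  proof (rule sum.cong[OF refl])
    fix B assume "B \<in> batches N b"
    then have "{i. i \<in> {..<N} \<and> i \<in> B} = B" by (auto simp: batches_def)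
    then show "(\<Sum>i\<in>B. f i) = (\<Sum>i\<in>{i. i \<in> {..<N} \<and> i \<in> B}. f i)" by simp
  qed
  also have "\<dots> = (\<Sum>i<N. \<Sum>B\<in>{B. B \<in> batches N b \<and> i \<in> B}. f i)"
    by (rule sum.swap_restrict) (auto simp: batches_fin)
  also have "\<dots> = (\<Sum>i<N. real ((N - 1) choose (b - 1)) * f i)"
    using batch_count[OF _ assms] by (auto intro!: sum.cong)
  finally show ?thesis by (simp add: sum_distrib_left)
qed

lemma choose_ratio:
  assumes "1 \<le> b" "b \<le> N"
  shows "real ((N - 1) choose (b - 1)) = real (N choose b) * real b / real N"
proof -
  have "b * (N choose b) = N * ((N - 1) choose (b - 1))" using times_binomial_minus1_eq[of b N] assms by simp
  then have "real b * real (N choose b) = real N * real ((N - 1) choose (b - 1))" by (metis of_nat_mult)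
  then show ?thesis using assms by (simp add: field_simps)
qed

lemma spec:
  fixes x :: "nat \<Rightarrow> 'a::euclidean_space"
  shows "(norm (\<Sum>i<N. c i *\<^sub>R x i))\<^sup>2 \<le> (sigma_max x N)\<^sup>2 * (\<Sum>i<N. (c i)\<^sup>2)"
proof -
  let ?S = "{norm (\<Sum>i<N. c i *\<^sub>R x i) | c. (\<Sum>i<N. (c i)\<^sup>2) \<le> 1}"
  have bdd: "bdd_above ?S"
  proof (rule bdd_aboveI)
    fix y assume "y \<in> ?S"
    then obtain c where c: "y = norm (\<Sum>i<N. c i *\<^sub>R x i)" "(\<Sum>i<N. (c i)\<^sup>2) \<le> 1" by blast
    have ci: "\<bar>c i\<bar> \<le> 1" if "i < N" for i
    proof -
      have "(c i)\<^sup>2 \<le> (\<Sum>i<N. (c i)\<^sup>2)" by (rule member_le_sum) (use that in auto)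
      then have "(c i)\<^sup>2 \<le> 1" using c by linarith
      then show ?thesis by (simp add: abs_square_le_1)
    qed
    have "y \<le> (\<Sum>i<N. norm (c i *\<^sub>R x i))" unfolding c(1) by (rule norm_sum)
    also have "\<dots> \<le> (\<Sum>i<N. norm (x i))"
      using ci by (auto intro!: sum_mono simp: mult_left_le_one_le)
    finally show "y \<le> (\<Sum>i<N. norm (x i))" .
  qed
  define s where "s = (\<Sum>i<N. (c i)\<^sup>2)"
  have s0: "s \<ge> 0" unfolding s_def by (auto intro: sum_nonneg)
  show ?thesis
  proof (cases "s = 0")
    case True
    then have "\<forall>i\<in>{..<N}. (c i)\<^sup>2 = 0" unfolding s_def by (subst (asm) sum_nonneg_eq_0_iff) auto
    then have "(\<Sum>i<N. c i *\<^sub>R x i) = 0" by (intro sum.neutral) auto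
    then show ?thesis using s0 by (simp add: s_def)
  next
    case False
    define r where "r = sqrt s"
    have r: "r > 0" using s0 False by (simp add: r_def)
    have rr: "r\<^sup>2 = s" using s0 by (simp add: r_def)
    define c' where "c' i = c i / r" for i
    have "(\<Sum>i<N. (c' i)\<^sup>2) = s / r\<^sup>2" by (simp add: c'_def s_def power_divide sum_divide_distrib)
    also have "\<dots> = 1" using rr False by simp
    finally have "(\<Sum>i<N. (c' i)\<^sup>2) \<le> 1" by simp
    then have "norm (\<Sum>i<N. c' i *\<^sub>R x i) \<in> ?S" by (intro CollectI exI[of _ c']) simp
    then have le: "norm (\<Sum>i<N. c' i *\<^sub>R x i) \<le> sigma_max x N"
      unfolding sigma_max_def by (rule cSup_upper[OF _ bdd])
    have "(\<Sum>i<N. c i *\<^sub>R x i) = r *\<^sub>R (\<Sum>i<N. c' i *\<^sub>R x i)"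
      using r by (simp add: c'_def scaleR_sum_right)
    then have "norm (\<Sum>i<N. c i *\<^sub>R x i) = r * norm (\<Sum>i<N. c' i *\<^sub>R x i)" using r by simp
    also have "\<dots> \<le> r * sigma_max x N" using le r by simp
    finally have "(norm (\<Sum>i<N. c i *\<^sub>R x i))\<^sup>2 \<le> (r * sigma_max x N)\<^sup>2"
      by (intro power_mono) auto
    then show ?thesis using rr by (simp add: power_mult_distrib s_def mult.commute)
  qed
qed

lemma mm:
  fixes x :: "nat \<Rightarrow> 'a::euclidean_space"
  assumes A1: "\<exists>v. \<forall>i<N. v \<bullet> x i > 0"
  shows "\<forall>i<N. max_margin x N \<bullet> x i \<ge> 1"
proof -
  let ?C = "\<Inter>i\<in>{..<N}. {v. x i \<bullet> v \<ge> 1}"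
  have cl: "closed ?C" by (intro closed_INT) (auto intro: closed_halfspace_ge)
  have cv: "convex ?C" by (intro convex_INT) (auto intro: convex_halfspace_ge)
  obtain v where v: "\<forall>i<N. v \<bullet> x i > 0" using A1 by blast
  define t where "t = (\<Sum>i<N. 1 / (v \<bullet> x i))"
  have "t *\<^sub>R v \<in> ?C"
  proof (clarsimp)
    fix i assume i: "i < N"
    have "1 / (v \<bullet> x i) \<le> t" unfolding t_def by (rule member_le_sum) (use i v in auto)
    then have "1 / (v \<bullet> x i) * (v \<bullet> x i) \<le> t * (v \<bullet> x i)"
      using v i by (intro mult_right_mono) (auto simp: less_imp_le)
    moreover have "1 / (v \<bullet> x i) * (v \<bullet> x i) = 1" using v i by (simp add: less_imp_neq[symmetric])
    ultimately show "1 \<le> t * (x i \<bullet> v)" by (simp add: inner_commute)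
  qed
  then have ne: "?C \<noteq> {}" by blast
  let ?p = "closest_point ?C 0"
  have P: "(\<forall>i<N. ?p \<bullet> x i \<ge> 1) \<and> (\<forall>v. (\<forall>i<N. v \<bullet> x i \<ge> 1) \<longrightarrow> (norm ?p)\<^sup>2 \<le> (norm v)\<^sup>2)"
  proof
    show "\<forall>i<N. ?p \<bullet> x i \<ge> 1" using closest_point_in_set[OF cl ne] by (auto simp: inner_commute)
    show "\<forall>v. (\<forall>i<N. v \<bullet> x i \<ge> 1) \<longrightarrow> (norm ?p)\<^sup>2 \<le> (norm v)\<^sup>2"
    proof (intro allI impI)
      fix u assume "\<forall>i<N. u \<bullet> x i \<ge> 1"
      then have "u \<in> ?C" by (auto simp: inner_commute)
      from closest_point_le[OF cl this, of 0] have "norm ?p \<le> norm u" by simp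
      then show "(norm ?p)\<^sup>2 \<le> (norm u)\<^sup>2" by (simp add: power_mono)
    qed
  qed
  have "max_margin x N = ?p"
    unfolding max_margin_def
  proof (rule the_equality)
    show "(\<forall>i<N. ?p \<bullet> x i \<ge> 1) \<and> (\<forall>v. (\<forall>i<N. v \<bullet> x i \<ge> 1) \<longrightarrow> (norm ?p)\<^sup>2 \<le> (norm v)\<^sup>2)" by (rule P)
  next
    fix u assume u: "(\<forall>i<N. u \<bullet> x i \<ge> 1) \<and> (\<forall>v. (\<forall>i<N. v \<bullet> x i \<ge> 1) \<longrightarrow> (norm u)\<^sup>2 \<le> (norm v)\<^sup>2)"
    have uC: "u \<in> ?C" using u by (auto simp: inner_commute)
    have "\<forall>z\<in>?C. dist 0 u \<le> dist 0 z"
    proof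
      fix z assume "z \<in> ?C"
      then have "\<forall>i<N. z \<bullet> x i \<ge> 1" by (simp add: inner_commute)
      then have "(norm u)\<^sup>2 \<le> (norm z)\<^sup>2" using u by blast
      then have "norm u \<le> norm z" by (rule power2_le_imp_le) simp
      then show "dist 0 u \<le> dist 0 z" by simp
    qed
    then show "u = ?p" by (rule closest_point_unique[OF cv cl uC])
  qed
  then show ?thesis using P by simp
qed


lemma sq_sum_le:
  fixes a :: "nat \<Rightarrow> real"
  assumes "\<And>i. i \<in> I \<Longrightarrow> a i \<ge> 0" "finite I"
  shows "(\<Sum>i\<in>I. (a i)\<^sup>2) \<le> (\<Sum>i\<in>I. a i)\<^sup>2"
proof -
  have "(\<Sum>i\<in>I. (a i)\<^sup>2) \<le> (\<Sum>i\<in>I. a i * (\<Sum>j\<in>I. a j))"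
  proof (rule sum_mono)
    fix i assume i: "i \<in> I"
    have "a i \<le> (\<Sum>j\<in>I. a j)" by (rule member_le_sum) (use assms i in auto)
    then show "(a i)\<^sup>2 \<le> a i * (\<Sum>j\<in>I. a j)" using assms(1)[OF i]
      by (simp add: power2_eq_square mult_left_mono)
  qed
  also have "\<dots> = (\<Sum>i\<in>I. a i)\<^sup>2" by (simp add: power2_eq_square sum_distrib_right)
  finally show ?thesis .
qed

theorem mainTheorem14:
  fixes x :: "nat \<Rightarrow> real ^ 'd" and N b :: nat and l :: "real \<Rightarrow> real" and w :: "real ^ 'd"
  assumes A1: "\<exists>v. \<forall>i<N. v \<bullet> x i > 0"
    and diff: "\<And>t. l differentiable (at t)"
    and neg: "\<And>t. deriv l t < 0"
    and b_pos: "1 \<le> b" and b_le: "b \<le> N"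
  shows "(norm (grad (full_loss l x N) w))\<^sup>2
           \<le> measure_pmf.expectation (pmf_of_set (batches N b))
                (\<lambda>B. (norm (grad (batch_loss l x b B) w))\<^sup>2)
       \<and> measure_pmf.expectation (pmf_of_set (batches N b))
                (\<lambda>B. (norm (grad (batch_loss l x b B) w))\<^sup>2)
           \<le> real N * (sigma_max x N)\<^sup>2 / ((margin x N)\<^sup>2 * real b)
               * (norm (grad (full_loss l x N) w))\<^sup>2"
proof -
  define S where "S = batches N b"
  define d where "d i = deriv l (w \<bullet> x i)" for i
  define v where "v = (\<Sum>i<N. d i *\<^sub>R x i)"
  define g where "g = (1 / real N) *\<^sub>R v"
  define gb where "gb B = (1 / real b) *\<^sub>R (\<Sum>i\<in>B. d i *\<^sub>R x i)" for B
  define K where "K = real (card S)"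
  define C where "C = real ((N - 1) choose (b - 1))"
  have N0: "real N > 0" using b_pos b_le by simp
  have b0: "real b > 0" using b_pos by simp
  have finS: "finite S" unfolding S_def by (rule batches_fin)
  have neS: "S \<noteq> {}" unfolding S_def using b_le by (rule batches_ne)
  have K0: "K > 0" unfolding K_def using finS neS by (simp add: card_gt_0_iff)
  have CK: "C = K * real b / real N" unfolding C_def K_def S_def batches_card
    by (rule choose_ratio[OF b_pos b_le])
  have gfull: "grad (full_loss l x N) w = g"
  proof -
    have "full_loss l x N = (\<lambda>w. (1 / real N) * (\<Sum>i\<in>{..<N}. l (w \<bullet> x i)))"
      by (rule ext) (simp add: full_loss_def)
    then show ?thesis using grad_loss[of "{..<N}" l "1 / real N" x w] diff
      by (simp add: g_def v_def d_def)
  qed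
  have gbatch: "grad (batch_loss l x b B) w = gb B" if "B \<in> S" for B
  proof -
    have fB: "finite B" using that unfolding S_def batches_def by (auto intro: finite_subset)
    have "batch_loss l x b B = (\<lambda>w. (1 / real b) * (\<Sum>i\<in>B. l (w \<bullet> x i)))"
      by (rule ext) (simp add: batch_loss_def)
    then show ?thesis using grad_loss[OF fB diff, of "1 / real b" x w]
      by (simp add: gb_def d_def)
  qed
  have E: "measure_pmf.expectation (pmf_of_set (batches N b))
                (\<lambda>B. (norm (grad (batch_loss l x b B) w))\<^sup>2) = (\<Sum>B\<in>S. (norm (gb B))\<^sup>2) / K"
    unfolding S_def[symmetric] K_def
    using finS neS gbatch by (simp add: integral_pmf_of_set)
  have cross: "(\<Sum>B\<in>S. gb B \<bullet> g) = K * (g \<bullet> g)"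
  proof -
    have "(\<Sum>B\<in>S. gb B \<bullet> g) = (1 / real b) * (\<Sum>B\<in>S. \<Sum>i\<in>B. d i * (x i \<bullet> g))"
      by (simp add: gb_def inner_sum_left sum_distrib_left)
    also have "\<dots> = (1 / real b) * (C * (\<Sum>i<N. d i * (x i \<bullet> g)))"
      unfolding S_def C_def by (simp add: batch_sum[OF b_pos])
    also have "(\<Sum>i<N. d i * (x i \<bullet> g)) = v \<bullet> g" by (simp add: v_def inner_sum_left)
    also have "v \<bullet> g = real N * (g \<bullet> g)" using N0 by (simp add: g_def)
    finally show ?thesis using N0 b0 by (simp add: CK field_simps)
  qed
  have lower: "K * (norm g)\<^sup>2 \<le> (\<Sum>B\<in>S. (norm (gb B))\<^sup>2)"
  proof -
    have "0 \<le> (\<Sum>B\<in>S. (norm (gb B - g))\<^sup>2)" by (simp add: sum_nonneg)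
    also have "\<dots> = (\<Sum>B\<in>S. (norm (gb B))\<^sup>2 - 2 * (gb B \<bullet> g) + (norm g)\<^sup>2)"
      by (intro sum.cong refl) (simp add: power2_norm_eq_inner inner_diff_left inner_diff_right inner_commute)
    also have "\<dots> = (\<Sum>B\<in>S. (norm (gb B))\<^sup>2) - 2 * (\<Sum>B\<in>S. gb B \<bullet> g) + K * (norm g)\<^sup>2"
      by (simp add: sum.distrib sum_subtractf sum_distrib_left K_def)
    finally show ?thesis using cross by (simp add: power2_norm_eq_inner)
  qed
  define s where "s = sigma_max x N"
  define Q where "Q = (\<Sum>i<N. (d i)\<^sup>2)"
  have each: "(norm (gb B))\<^sup>2 \<le> (1 / real b)\<^sup>2 * (s\<^sup>2 * (\<Sum>i\<in>B. (d i)\<^sup>2))" if "B \<in> S" for B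
  proof -
    have BN: "B \<subseteq> {..<N}" using that unfolding S_def batches_def by auto
    define c where "c i = (if i \<in> B then d i else 0)" for i
    have e1: "(\<Sum>i\<in>B. d i *\<^sub>R x i) = (\<Sum>i<N. c i *\<^sub>R x i)"
    proof -
      have "(\<Sum>i<N. c i *\<^sub>R x i) = (\<Sum>i\<in>B. c i *\<^sub>R x i)"
        by (rule sum.mono_neutral_right) (use BN in \<open>auto simp: c_def\<close>)
      then show ?thesis by (simp add: c_def)
    qed
    have e2: "(\<Sum>i<N. (c i)\<^sup>2) = (\<Sum>i\<in>B. (d i)\<^sup>2)"
    proof -
      have "(\<Sum>i<N. (c i)\<^sup>2) = (\<Sum>i\<in>B. (c i)\<^sup>2)"
        by (rule sum.mono_neutral_right) (use BN in \<open>auto simp: c_def\<close>)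
      then show ?thesis by (simp add: c_def)
    qed
    have "(norm (gb B))\<^sup>2 = (1 / real b)\<^sup>2 * (norm (\<Sum>i<N. c i *\<^sub>R x i))\<^sup>2"
      by (simp add: gb_def e1 power_divide)
    also have "\<dots> \<le> (1 / real b)\<^sup>2 * (s\<^sup>2 * (\<Sum>i\<in>B. (d i)\<^sup>2))"
      using spec[where N=N and c=c and x=x] e2 unfolding s_def by (intro mult_left_mono) auto
    finally show ?thesis .
  qed
  have up1: "(\<Sum>B\<in>S. (norm (gb B))\<^sup>2) \<le> (1 / real b)\<^sup>2 * s\<^sup>2 * C * Q"
  proof -
    have "(\<Sum>B\<in>S. (norm (gb B))\<^sup>2) \<le> (\<Sum>B\<in>S. (1 / real b)\<^sup>2 * (s\<^sup>2 * (\<Sum>i\<in>B. (d i)\<^sup>2)))"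
      by (rule sum_mono) (rule each)
    also have "\<dots> = (1 / real b)\<^sup>2 * s\<^sup>2 * (\<Sum>B\<in>S. \<Sum>i\<in>B. (d i)\<^sup>2)"
      by (simp add: sum_distrib_left mult.assoc)
    also have "\<dots> = (1 / real b)\<^sup>2 * s\<^sup>2 * C * Q"
      unfolding S_def C_def Q_def by (simp add: batch_sum[OF b_pos])
    finally show ?thesis .
  qed
  define M where "M = norm (max_margin x N)"
  have mmf: "\<forall>i<N. max_margin x N \<bullet> x i \<ge> 1" by (rule mm[OF A1])
  have QM: "Q \<le> M\<^sup>2 * (norm v)\<^sup>2"
  proof -
    have q1: "Q \<le> (\<Sum>i<N. - d i)\<^sup>2"
    proof -
      have "Q = (\<Sum>i<N. (- d i)\<^sup>2)" by (simp add: Q_def)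
      also have "\<dots> \<le> (\<Sum>i<N. - d i)\<^sup>2"
        by (rule sq_sum_le) (auto simp: d_def less_imp_le neg)
      finally show ?thesis .
    qed
    have q0: "0 \<le> (\<Sum>i<N. - d i)" by (rule sum_nonneg) (auto simp: d_def less_imp_le neg)
    have "(\<Sum>i<N. - d i) \<le> (\<Sum>i<N. - d i * (max_margin x N \<bullet> x i))"
    proof (rule sum_mono)
      fix i assume "i \<in> {..<N}"
      then have "max_margin x N \<bullet> x i \<ge> 1" using mmf by auto
      moreover have "- d i > 0" using neg by (simp add: d_def)
      ultimately show "- d i \<le> - d i * (max_margin x N \<bullet> x i)"
        using mult_left_mono[of 1 "max_margin x N \<bullet> x i" "- d i"] by simp
    qed
    also have "(\<Sum>i<N. - d i * (max_margin x N \<bullet> x i)) = - (max_margin x N \<bullet> v)"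
      by (simp add: v_def inner_sum_right sum_negf inner_commute)
    also have "- (max_margin x N \<bullet> v) \<le> M * norm v"
      unfolding M_def using Cauchy_Schwarz_ineq2[of "max_margin x N" v] by linarith
    finally have "(\<Sum>i<N. - d i) \<le> M * norm v" .
    then have "(\<Sum>i<N. - d i)\<^sup>2 \<le> (M * norm v)\<^sup>2" using q0 by (rule power_mono)
    then show ?thesis using q1 by (simp add: power_mult_distrib)
  qed
  have M0: "M > 0"
  proof -
    have "max_margin x N \<bullet> x 0 \<ge> 1" using mmf N0 by auto
    then have "max_margin x N \<noteq> 0" by auto
    then show ?thesis by (simp add: M_def)
  qed
  have nv: "norm v = real N * norm g" using N0 by (simp add: g_def)
  have mg: "margin x N = 1 / M" by (simp add: margin_def M_def)
  have Eub: "(\<Sum>B\<in>S. (norm (gb B))\<^sup>2) / K \<le> s\<^sup>2 * Q / (real b * real N)"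
  proof -
    have "(\<Sum>B\<in>S. (norm (gb B))\<^sup>2) / K \<le> ((1 / real b)\<^sup>2 * s\<^sup>2 * C * Q) / K"
      using up1 K0 by (simp add: divide_right_mono)
    also have "\<dots> = s\<^sup>2 * Q / (real b * real N)" using K0 b0 N0
      by (simp add: CK field_simps power2_eq_square)
    finally show ?thesis .
  qed
  have "s\<^sup>2 * Q / (real b * real N) \<le> s\<^sup>2 * (M\<^sup>2 * (real N * norm g)\<^sup>2) / (real b * real N)"
    using QM nv b0 N0 by (intro divide_right_mono mult_left_mono) auto
  also have "\<dots> = real N * s\<^sup>2 / ((1 / M)\<^sup>2 * real b) * (norm g)\<^sup>2"
    using M0 b0 N0 by (simp add: field_simps power2_eq_square)
  finally have ub: "(\<Sum>B\<in>S. (norm (gb B))\<^sup>2) / K \<le> real N * s\<^sup>2 / ((1 / M)\<^sup>2 * real b) * (norm g)\<^sup>2"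
    using Eub by linarith
  have lb: "(norm g)\<^sup>2 \<le> (\<Sum>B\<in>S. (norm (gb B))\<^sup>2) / K"
    using lower K0 by (simp add: field_simps)
  show ?thesis unfolding E gfull mg using lb ub by (simp add: s_def)
qed

end
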